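(* Let $C\in\mathbb{R}^{n\times n}$ be symmetric positive definite, let $F\in\mathbb{R}^{n\times n_p}$ with $n_p<n$ have full column rank, and let $\beta>\beta_\ell>0$. Set $\hat{C}=C+\beta FF^T$ and $\hat{C}_\ell=C+\beta_\ell FF^T$. For $\mathbf{b}\in\mathbb{R}^n$ consider the stationary iteration $$\mathbf{w}_{k+1}=\mathbf{w}_k+\frac{\beta_\ell}{\beta}\hat{C}_\ell^{-1}\left(\mathbf{b}-\hat{C}\mathbf{w}_k\right),\qquad k=0,1,2,\dots$$ Its iteration matrix $G=I-\frac{\beta_\ell}{\beta}\hat{C}_\ell^{-1}\hat{C}$ satisfies $G=\left(1-\frac{\beta_\ell}{\beta}\right)\hat{C}_\ell^{-1}C$ and has spectral radius exactly $1-\beta_\ell/\beta<1$. Consequently, for every $\mathbf{b}$ and every initial guess $\mathbf{w}_0$, the iterates $\mathbf{w}_k$ converge to the unique solution of $\hat{C}\mathbf{w}=\mathbf{b}$, with asymptotic convergence factor $1-\beta_\ell/\beta$ (i.e., rate $R=\log(1-\beta_\ell/\beta)$ in the paper's convention). *)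

theory Defs
  imports "HOL-Analysis.Analysis"
begin

definition spd :: "real^'n^'n \<Rightarrow> bool" where
  "spd A \<longleftrightarrow> transpose A = A \<and> (\<forall>x. x \<noteq> 0 \<longrightarrow> x \<bullet> (A *v x) > 0)"

definition cspectrum :: "real^'n^'n \<Rightarrow> complex set" where
  "cspectrum A = {z. \<exists>v::complex^'n. v \<noteq> 0 \<and>
      (\<chi> i j. complex_of_real (A $ i $ j)) *v v = z *s v}"

definition spectral_radius :: "real^'n^'n \<Rightarrow> real" where
  "spectral_radius A = Max (cmod ` cspectrum A)"

end

theory Submission
  imports Defs
begin

lemma transpose_add': "transpose (A + B) = transpose A + transpose (B::real^'n^'m)"
  by (simp add: transpose_def vec_eq_iff)

lemma FFt_dot:
  fixes F :: "real^'p^'n"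
  shows "x \<bullet> ((F ** transpose F) *v x) = (transpose F *v x) \<bullet> (transpose F *v x)"
proof -
  have "x \<bullet> ((F ** transpose F) *v x) = x \<bullet> (F *v (transpose F *v x))"
    by (metis matrix_vector_mul_assoc)
  also have "\<dots> = (x v* F) \<bullet> (transpose F *v x)" by (simp add: dot_lmul_matrix)
  finally show ?thesis by simp
qed

lemma spd_FF:
  fixes C :: "real^'n^'n" and F :: "real^'p^'n"
  assumes "spd C" "0 \<le> t"
  shows "spd (C + t *\<^sub>R (F ** transpose F))"
  unfolding spd_def
proof safe
  show "transpose (C + t *\<^sub>R (F ** transpose F)) = C + t *\<^sub>R (F ** transpose F)"
    using assms(1) unfolding spd_def
    by (simp add: transpose_add' transpose_scalar matrix_transpose_mul)
next
  fix x :: "real^'n" assume "x \<noteq> 0"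
  have "x \<bullet> (C *v x) > 0" using assms(1) \<open>x \<noteq> 0\<close> unfolding spd_def by blast
  moreover have "x \<bullet> ((F ** transpose F) *v x) \<ge> 0" by (simp only: FFt_dot inner_ge_zero)
  ultimately show "x \<bullet> ((C + t *\<^sub>R (F ** transpose F)) *v x) > 0"
    using assms(2) by (simp add: matrix_vector_mult_add_rdistrib inner_add_right scaleR_matrix_vector_assoc[symmetric] add_pos_nonneg)
qed
lemma sym_dot:
  fixes A :: "real^'n^'n"
  assumes "transpose A = A"
  shows "u \<bullet> (A *v w) = w \<bullet> (A *v u)"
proof -
  have "u \<bullet> (A *v w) = (u v* A) \<bullet> w" by (simp add: dot_lmul_matrix)
  also have "\<dots> = (transpose A *v u) \<bullet> w" by simp
  also have "\<dots> = w \<bullet> (A *v u)" using assms by (simp add: inner_commute)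
  finally show ?thesis .
qed

lemma eig_parts:
  fixes G :: "real^'n^'n" and v :: "complex^'n"
  assumes "(\<chi> i j. complex_of_real (G$i$j)) *v v = z *s v"
  shows "G *v (\<chi> i. Re (v$i)) = Re z *\<^sub>R (\<chi> i. Re(v$i)) - Im z *\<^sub>R (\<chi> i. Im (v$i))"
    and "G *v (\<chi> i. Im (v$i)) = Im z *\<^sub>R (\<chi> i. Re(v$i)) + Re z *\<^sub>R (\<chi> i. Im (v$i))"
proof -
  have e: "(\<Sum>j\<in>UNIV. complex_of_real (G$i$j) * v$j) = z * v$i" for i
    using assms by (simp add: vec_eq_iff matrix_vector_mult_def)
  have r: "(\<Sum>j\<in>UNIV. G$i$j * Re (v$j)) = Re z * Re (v$i) - Im z * Im (v$i)" for i
    using arg_cong[OF e[of i], of Re] by (simp add: Re_sum)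
  have im: "(\<Sum>j\<in>UNIV. G$i$j * Im (v$j)) = Im z * Re (v$i) + Re z * Im (v$i)" for i
    using arg_cong[OF e[of i], of Im] by (simp add: Im_sum)
  show "G *v (\<chi> i. Re (v$i)) = Re z *\<^sub>R (\<chi> i. Re(v$i)) - Im z *\<^sub>R (\<chi> i. Im (v$i))"
    using r by (simp add: vec_eq_iff matrix_vector_mult_def)
  show "G *v (\<chi> i. Im (v$i)) = Im z *\<^sub>R (\<chi> i. Re(v$i)) + Re z *\<^sub>R (\<chi> i. Im (v$i))"
    using im by (simp add: vec_eq_iff matrix_vector_mult_def)
qed
lemma spd_inv:
  fixes A :: "real^'n^'n"
  assumes "spd A"
  shows "A ** matrix_inv A = mat 1 \<and> matrix_inv A ** A = mat 1"
proof -
  have "\<forall>x. A *v x = 0 \<longrightarrow> x = 0"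
    using assms unfolding spd_def by (metis inner_zero_right less_irrefl)
  then have "\<exists>B. B ** A = mat 1" using matrix_left_invertible_ker by blast
  then have "invertible A" using invertible_left_inverse by blast
  then show ?thesis unfolding matrix_inv_def invertible_def by (rule someI_ex)
qed

lemma spd_nonneg: "spd A \<Longrightarrow> 0 \<le> x \<bullet> (A *v x)"
  unfolding spd_def by (cases "x = 0") (auto intro: less_imp_le)

lemma eig_bound:
  fixes G C L :: "real^'n^'n" and v :: "complex^'n"
  assumes C: "spd C" and L: "spd L" and LG: "L ** G = c *\<^sub>R C"
    and CL: "\<And>x. x \<bullet> (C *v x) \<le> x \<bullet> (L *v x)" and c: "0 \<le> c"
    and eig: "(\<chi> i j. complex_of_real (G$i$j)) *v v = z *s v" and v: "v \<noteq> 0"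
  shows "Im z = 0 \<and> 0 \<le> Re z \<and> Re z \<le> c \<and> (\<exists>u. u \<noteq> 0 \<and> G *v u = Re z *\<^sub>R u)"
proof -
  define x where "x = (\<chi> i. Re (v$i))"
  define y where "y = (\<chi> i. Im (v$i))"
  define a where "a = Re z"
  define b where "b = Im z"
  have Gx: "G *v x = a *\<^sub>R x - b *\<^sub>R y" and Gy: "G *v y = b *\<^sub>R x + a *\<^sub>R y"
    using eig_parts[OF eig] unfolding x_def y_def a_def b_def by auto
  have LGw: "L *v (G *v w) = c *\<^sub>R (C *v w)" for w
    by (simp add: matrix_vector_mul_assoc LG scaleR_matrix_vector_assoc)
  have Ls: "transpose L = L" and Cs: "transpose C = C" using C L unfolding spd_def by auto
  have symL: "x \<bullet> (L *v y) = y \<bullet> (L *v x)" using sym_dot[OF Ls] .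
  have symC: "x \<bullet> (C *v y) = y \<bullet> (C *v x)" using sym_dot[OF Cs] .
  have e1: "c * (x \<bullet> (C *v x)) = a * (x \<bullet> (L *v x)) - b * (x \<bullet> (L *v y))"
    using arg_cong[OF LGw[of x], of "\<lambda>t. x \<bullet> t"] Gx
    by (simp add: matrix_vector_mult_diff_distrib matrix_vector_mult_scaleR inner_diff_right)
  have e2: "c * (y \<bullet> (C *v y)) = b * (y \<bullet> (L *v x)) + a * (y \<bullet> (L *v y))"
    using arg_cong[OF LGw[of y], of "\<lambda>t. y \<bullet> t"] Gy
    by (simp add: matrix_vector_right_distrib matrix_vector_mult_scaleR inner_add_right)
  have e3: "c * (y \<bullet> (C *v x)) = a * (y \<bullet> (L *v x)) - b * (y \<bullet> (L *v y))"
    using arg_cong[OF LGw[of x], of "\<lambda>t. y \<bullet> t"] Gx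
    by (simp add: matrix_vector_mult_diff_distrib matrix_vector_mult_scaleR inner_diff_right)
  have e4: "c * (x \<bullet> (C *v y)) = b * (x \<bullet> (L *v x)) + a * (x \<bullet> (L *v y))"
    using arg_cong[OF LGw[of y], of "\<lambda>t. x \<bullet> t"] Gy
    by (simp add: matrix_vector_right_distrib matrix_vector_mult_scaleR inner_add_right)
  have xy: "x \<noteq> 0 \<or> y \<noteq> 0"
  proof (rule ccontr)
    assume "\<not> (x \<noteq> 0 \<or> y \<noteq> 0)"
    then have "v$i = 0" for i
      unfolding x_def y_def by (simp add: vec_eq_iff complex_eq_iff)
    then show False using v by (simp add: vec_eq_iff)
  qed
  define Q where "Q = x \<bullet> (L *v x) + y \<bullet> (L *v y)"
  define P where "P = x \<bullet> (C *v x) + y \<bullet> (C *v y)"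
  have Q: "Q > 0"
    using xy L spd_nonneg[OF L, of x] spd_nonneg[OF L, of y] unfolding Q_def spd_def
    by (metis add_nonneg_pos add_pos_nonneg)
  have P0: "0 \<le> P" using spd_nonneg[OF C, of x] spd_nonneg[OF C, of y] unfolding P_def by simp
  have PQ: "P \<le> Q" using CL[of x] CL[of y] unfolding P_def Q_def by simp
  have cP: "c * P = a * Q" using e1 e2 symL unfolding P_def Q_def by (simp add: algebra_simps)
  have bQ: "b * Q = 0" using e3 e4 symL symC unfolding Q_def by (simp add: algebra_simps)
  then have b0: "b = 0" using Q by simp
  have "0 \<le> a * Q" using cP c P0 by (metis mult_nonneg_nonneg)
  then have a0: "0 \<le> a" using Q by (simp add: zero_le_mult_iff)
  have ac: "a \<le> c"
  proof -
    have "a * Q \<le> c * Q" using cP PQ c by (metis mult_left_mono)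
    then show ?thesis using Q by simp
  qed
  have "\<exists>u. u \<noteq> 0 \<and> G *v u = a *\<^sub>R u"
    using xy Gx Gy b0 by auto
  then show ?thesis using b0 a0 ac unfolding a_def b_def by auto
qed
lemma finite_eigs:
  fixes G C L :: "real^'n^'n"
  assumes L: "spd L" and Cs: "transpose C = C" and LG: "L ** G = c *\<^sub>R C"
  shows "finite {s::real. \<exists>u. u \<noteq> 0 \<and> G *v u = s *\<^sub>R u}"
proof -
  define S where "S = {s::real. \<exists>u. u \<noteq> 0 \<and> G *v u = s *\<^sub>R u}"
  define U where "U s = (SOME u. u \<noteq> 0 \<and> G *v u = s *\<^sub>R u)" for s
  have U: "U s \<noteq> 0 \<and> G *v U s = s *\<^sub>R U s" if "s \<in> S" for s
    using that unfolding S_def U_def by (metis (mono_tags, lifting) mem_Collect_eq someI_ex)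
  have Ls: "transpose L = L" using L unfolding spd_def by auto
  have pos: "U s \<bullet> (L *v U s) > 0" if "s \<in> S" for s
    using U[OF that] L unfolding spd_def by blast
  have LGw: "L *v (G *v w) = c *\<^sub>R (C *v w)" for w
    by (simp add: matrix_vector_mul_assoc LG scaleR_matrix_vector_assoc)
  have orth: "U t \<bullet> (L *v U s) = 0" if "s \<in> S" "t \<in> S" "s \<noteq> t" for s t
  proof -
    have "c * (U t \<bullet> (C *v U s)) = s * (U t \<bullet> (L *v U s))"
      using arg_cong[OF LGw[of "U s"], of "\<lambda>w. U t \<bullet> w"] U[OF that(1)]
      by (simp add: matrix_vector_mult_scaleR)
    moreover have "c * (U s \<bullet> (C *v U t)) = t * (U s \<bullet> (L *v U t))"
      using arg_cong[OF LGw[of "U t"], of "\<lambda>w. U s \<bullet> w"] U[OF that(2)]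
      by (simp add: matrix_vector_mult_scaleR)
    moreover have "U s \<bullet> (C *v U t) = U t \<bullet> (C *v U s)" using sym_dot[OF Cs] .
    moreover have "U s \<bullet> (L *v U t) = U t \<bullet> (L *v U s)" using sym_dot[OF Ls] .
    ultimately have "(s - t) * (U t \<bullet> (L *v U s)) = 0" by (simp add: algebra_simps)
    then show ?thesis using that by simp
  qed
  define Y where "Y = (\<lambda>s. L *v U s) ` S"
  have inj: "inj_on (\<lambda>s. L *v U s) S"
  proof (rule inj_onI, rule ccontr)
    fix s t assume st: "s \<in> S" "t \<in> S" "L *v U s = L *v U t" "s \<noteq> t"
    then have "U s \<bullet> (L *v U s) = U s \<bullet> (L *v U t)" by simp
    also have "\<dots> = 0" using orth[of t s] st by simp
    finally show False using pos[OF st(1)] by simp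
  qed
  have "independent Y"
  proof
    assume "dependent Y"
    then obtain T g where T: "finite T" "T \<subseteq> Y" "(\<Sum>v\<in>T. g v *\<^sub>R v) = 0" "\<exists>v\<in>T. g v \<noteq> 0"
      unfolding real_vector.dependent_explicit by blast
    from T(2) obtain B where B: "B \<subseteq> S" "T = (\<lambda>s. L *v U s) ` B"
      unfolding Y_def by (metis subset_imageE)
    have injB: "inj_on (\<lambda>s. L *v U s) B" using inj B(1) inj_on_subset by blast
    have finB: "finite B" using T(1) B(2) injB finite_image_iff by blast
    obtain t0 where t0: "t0 \<in> B" "g (L *v U t0) \<noteq> 0" using T(4) B(2) by blast
    have "0 = U t0 \<bullet> (\<Sum>v\<in>T. g v *\<^sub>R v)" using T(3) by simp
    also have "\<dots> = (\<Sum>s\<in>B. g (L *v U s) * (U t0 \<bullet> (L *v U s)))"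
      unfolding B(2) by (simp add: sum.reindex[OF injB] inner_sum_right)
    also have "\<dots> = g (L *v U t0) * (U t0 \<bullet> (L *v U t0))"
    proof -
      have "(\<Sum>s\<in>B-{t0}. g (L *v U s) * (U t0 \<bullet> (L *v U s))) = 0"
        using orth B(1) t0(1) by (intro sum.neutral) auto
      then show ?thesis using sum.remove[OF finB t0(1), of "\<lambda>s. g (L *v U s) * (U t0 \<bullet> (L *v U s))"]
        by simp
    qed
    finally show False using t0 pos[of t0] B(1) by auto
  qed
  then have "finite Y" using independent_bound by blast
  then show ?thesis unfolding S_def[symmetric] Y_def using inj finite_image_iff by blast
qed
lemma spec_rad:
  fixes G C L :: "real^'n^'n"
  assumes C: "spd C" and L: "spd L" and LG: "L ** G = c *\<^sub>R C"
    and CL: "\<And>x. x \<bullet> (C *v x) \<le> x \<bullet> (L *v x)" and c: "0 \<le> c"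
    and u0: "u0 \<noteq> 0" "G *v u0 = c *\<^sub>R u0"
  shows "spectral_radius G = c"
proof -
  have Cs: "transpose C = C" using C unfolding spd_def by auto
  have sub: "cspectrum G \<subseteq> complex_of_real ` {s::real. \<exists>u. u \<noteq> 0 \<and> G *v u = s *\<^sub>R u}"
  proof
    fix z assume "z \<in> cspectrum G"
    then obtain v where v: "v \<noteq> 0" "(\<chi> i j. complex_of_real (G$i$j)) *v v = z *s v"
      unfolding cspectrum_def by blast
    from eig_bound[OF C L LG CL c v(2) v(1)]
    have "Im z = 0" "\<exists>u. u \<noteq> 0 \<and> G *v u = Re z *\<^sub>R u" by auto
    moreover then have "z = complex_of_real (Re z)" by (simp add: complex_eq_iff)
    ultimately show "z \<in> complex_of_real ` {s::real. \<exists>u. u \<noteq> 0 \<and> G *v u = s *\<^sub>R u}"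
      by blast
  qed
  have fin: "finite (cmod ` cspectrum G)"
    using finite_subset[OF sub finite_imageI[OF finite_eigs[OF L Cs LG]]] by blast
  have le: "y \<le> c" if "y \<in> cmod ` cspectrum G" for y
  proof -
    obtain z where z: "z \<in> cspectrum G" "y = cmod z" using \<open>y \<in> _\<close> by blast
    then obtain v where v: "v \<noteq> 0" "(\<chi> i j. complex_of_real (G$i$j)) *v v = z *s v"
      unfolding cspectrum_def by blast
    from eig_bound[OF C L LG CL c v(2) v(1)]
    have "Im z = 0" "0 \<le> Re z" "Re z \<le> c" by auto
    then show ?thesis using z(2) by (simp add: cmod_def)
  qed
  have mem: "complex_of_real c \<in> cspectrum G"
    unfolding cspectrum_def
  proof (intro CollectI exI conjI)
    show "(\<chi> i. complex_of_real (u0$i)) \<noteq> 0" using u0(1) by (simp add: vec_eq_iff)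
    have "(\<Sum>j\<in>UNIV. G$i$j * u0$j) = c * u0$i" for i
      using u0(2) by (simp add: vec_eq_iff matrix_vector_mult_def)
    then show "(\<chi> i j. complex_of_real (G$i$j)) *v (\<chi> i. complex_of_real (u0$i))
        = complex_of_real c *s (\<chi> i. complex_of_real (u0$i))"
      by (simp add: vec_eq_iff matrix_vector_mult_def flip: of_real_mult of_real_sum)
  qed
  have "c \<in> cmod ` cspectrum G" using imageI[OF mem, of cmod] c by simp
  then show ?thesis unfolding spectral_radius_def using fin le by (intro Max_eqI) auto
qed
lemma spd_coercive:
  fixes L :: "real^'n^'n"
  assumes L: "spd L"
  shows "\<exists>m>0. \<forall>x. m * (norm x)^2 \<le> x \<bullet> (L *v x)"
proof -
  have ne: "sphere (0::real^'n) 1 \<noteq> {}"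
    using norm_axis_1[of undefined] by (metis mem_sphere_0 empty_iff)
  have cont: "continuous_on (sphere (0::real^'n) 1) (\<lambda>x. x \<bullet> (L *v x))"
    by (intro continuous_intros)
  obtain x0 where x0: "x0 \<in> sphere 0 1" "\<forall>y\<in>sphere 0 1. x0 \<bullet> (L *v x0) \<le> y \<bullet> (L *v y)"
    using continuous_attains_inf[OF compact_sphere ne cont] by blast
  define m where "m = x0 \<bullet> (L *v x0)"
  have "x0 \<noteq> 0" using x0(1) by auto
  then have m: "m > 0" using L unfolding spd_def m_def by blast
  have "m * (norm x)^2 \<le> x \<bullet> (L *v x)" for x
  proof (cases "x = 0")
    case True then show ?thesis by simp
  next
    case False
    define y where "y = (1 / norm x) *\<^sub>R x"
    have "y \<in> sphere 0 1" using False unfolding y_def by simp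
    then have "m \<le> y \<bullet> (L *v y)" using x0(2) unfolding m_def by blast
    also have "y \<bullet> (L *v y) = (1 / norm x)^2 * (x \<bullet> (L *v x))"
      unfolding y_def by (simp add: matrix_vector_mult_scaleR power2_eq_square)
    finally have "m * (norm x)^2 \<le> (1 / norm x)^2 * (x \<bullet> (L *v x)) * (norm x)^2"
      by (simp add: mult_right_mono)
    also have "\<dots> = x \<bullet> (L *v x)" using False by (simp add: field_simps)
    finally show ?thesis .
  qed
  then show ?thesis using m by blast
qed

lemma energy_step:
  fixes C L Li :: "real^'n^'n"
  assumes C: "spd C" and LLi: "L ** Li = mat 1"
    and CL: "\<And>x. x \<bullet> (C *v x) \<le> x \<bullet> (L *v x)"
  shows "(c *\<^sub>R (Li *v (C *v e))) \<bullet> (L *v (c *\<^sub>R (Li *v (C *v e)))) \<le> c^2 * (e \<bullet> (L *v e))"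
proof -
  define u where "u = Li *v (C *v e)"
  have Lu: "L *v u = C *v e" unfolding u_def by (metis matrix_vector_mul_assoc matrix_vector_mul_lid LLi)
  have Cs: "transpose C = C" using C unfolding spd_def by auto
  have "0 \<le> (e - u) \<bullet> (C *v (e - u))" using spd_nonneg[OF C] .
  also have "\<dots> = e \<bullet> (C *v e) - 2 * (u \<bullet> (C *v e)) + u \<bullet> (C *v u)"
    using sym_dot[OF Cs, of e u]
    by (simp add: matrix_vector_mult_diff_distrib inner_diff_left inner_diff_right)
  finally have 1: "0 \<le> e \<bullet> (C *v e) - 2 * (u \<bullet> (L *v u)) + u \<bullet> (C *v u)" by (simp add: Lu)
  have "u \<bullet> (L *v u) \<le> e \<bullet> (L *v e)" using 1 CL[of u] CL[of e] by linarith
  then have "c^2 * (u \<bullet> (L *v u)) \<le> c^2 * (e \<bullet> (L *v e))" by (simp add: mult_left_mono)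
  then show ?thesis unfolding u_def[symmetric]
    by (simp add: matrix_vector_mult_scaleR power2_eq_square mult.assoc)
qed

lemma conv_zero:
  fixes C L Li :: "real^'n^'n" and e :: "nat \<Rightarrow> real^'n"
  assumes C: "spd C" and L: "spd L" and LLi: "L ** Li = mat 1"
    and CL: "\<And>x. x \<bullet> (C *v x) \<le> x \<bullet> (L *v x)"
    and c: "0 \<le> c" "c < 1"
    and e: "\<And>k. e (Suc k) = c *\<^sub>R (Li *v (C *v e k))"
  shows "e \<longlonglongrightarrow> 0"
proof -
  define E where "E x = x \<bullet> (L *v x)" for x
  have step: "E (e (Suc k)) \<le> c^2 * E (e k)" for k
    unfolding E_def e using energy_step[OF C LLi CL] .
  have bound: "E (e k) \<le> (c^2)^k * E (e 0)" for k
  proof (induction k)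
    case 0 then show ?case by simp
  next
    case (Suc k)
    have "E (e (Suc k)) \<le> c^2 * E (e k)" by (rule step)
    also have "\<dots> \<le> c^2 * ((c^2)^k * E (e 0))" using Suc by (simp add: mult_left_mono)
    finally show ?case by (simp add: mult.assoc)
  qed
  obtain m where m: "m > 0" "\<And>x. m * (norm x)^2 \<le> E x"
    using spd_coercive[OF L] unfolding E_def by blast
  have g: "(\<lambda>k. (c^2)^k * E (e 0) / m) \<longlonglongrightarrow> 0"
  proof -
    have "(\<lambda>k. (c^2)^k) \<longlonglongrightarrow> 0" using c by (intro LIMSEQ_power_zero) (simp add: abs_square_less_1)
    then have "(\<lambda>k. (c^2)^k * (E (e 0) / m)) \<longlonglongrightarrow> 0 * (E (e 0) / m)" by (intro tendsto_mult) auto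
    then show ?thesis by simp
  qed
  have "(\<lambda>k. (norm (e k))^2) \<longlonglongrightarrow> 0"
  proof (rule Lim_null_comparison[OF _ g])
    show "\<forall>\<^sub>F k in sequentially. norm ((norm (e k))^2) \<le> (c^2)^k * E (e 0) / m"
    proof (rule always_eventually, rule allI)
      fix k
      have "m * (norm (e k))^2 \<le> (c^2)^k * E (e 0)" using m(2)[of "e k"] bound[of k] by linarith
      then show "norm ((norm (e k))^2) \<le> (c^2)^k * E (e 0) / m" using m(1)
        by (simp add: field_simps)
    qed
  qed
  then have "(\<lambda>k. sqrt ((norm (e k))^2)) \<longlonglongrightarrow> sqrt 0" by (intro tendsto_real_sqrt)
  then have "(\<lambda>k. norm (e k)) \<longlonglongrightarrow> 0" by simp
  then show ?thesis using tendsto_norm_zero_cancel by blast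
qed
theorem lemma3p2:
  fixes C :: "real^'n^'n" and F :: "real^'p^'n"
    and \<beta> \<beta>l :: real and b :: "real^'n" and w :: "nat \<Rightarrow> real^'n"
  assumes C_spd: "spd C"
    and np_lt_n: "CARD('p) < CARD('n)"
    and F_rank: "rank F = CARD('p)"
    and \<beta>l_pos: "0 < \<beta>l" and \<beta>_gt: "\<beta>l < \<beta>"
    and iter: "\<And>k. w (Suc k) = w k + (\<beta>l / \<beta>) *s
        (matrix_inv (C + \<beta>l *\<^sub>R (F ** transpose F))
           *v (b - (C + \<beta> *\<^sub>R (F ** transpose F)) *v w k))"
  shows "mat 1 - (\<beta>l / \<beta>) *\<^sub>R (matrix_inv (C + \<beta>l *\<^sub>R (F ** transpose F))
             ** (C + \<beta> *\<^sub>R (F ** transpose F)))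
         = (1 - \<beta>l / \<beta>) *\<^sub>R (matrix_inv (C + \<beta>l *\<^sub>R (F ** transpose F)) ** C)
     \<and> spectral_radius (mat 1 - (\<beta>l / \<beta>) *\<^sub>R (matrix_inv (C + \<beta>l *\<^sub>R (F ** transpose F))
             ** (C + \<beta> *\<^sub>R (F ** transpose F)))) = 1 - \<beta>l / \<beta>
     \<and> 1 - \<beta>l / \<beta> < 1
     \<and> (\<exists>!x. (C + \<beta> *\<^sub>R (F ** transpose F)) *v x = b)
     \<and> w \<longlonglongrightarrow> (THE x. (C + \<beta> *\<^sub>R (F ** transpose F)) *v x = b)"
proof -
  define K where "K = F ** transpose F"
  define L where "L = C + \<beta>l *\<^sub>R K"
  define H where "H = C + \<beta> *\<^sub>R K"
  define Li where "Li = matrix_inv L"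
  define c where "c = 1 - \<beta>l / \<beta>"
  define G where "G = mat 1 - (\<beta>l / \<beta>) *\<^sub>R (Li ** H)"
  have \<beta>pos: "0 < \<beta>" using \<beta>l_pos \<beta>_gt by linarith
  have c0: "0 \<le> c" and c1: "c < 1" using \<beta>l_pos \<beta>_gt \<beta>pos unfolding c_def by (auto simp: field_simps)
  have L: "spd L" unfolding L_def K_def using spd_FF[OF C_spd less_imp_le[OF \<beta>l_pos], of F] by simp
  have H: "spd H" unfolding H_def K_def using spd_FF[OF C_spd less_imp_le[OF \<beta>pos], of F] by simp
  have LLi: "L ** Li = mat 1" and LiL: "Li ** L = mat 1" using spd_inv[OF L] unfolding Li_def by auto
  have CL: "x \<bullet> (C *v x) \<le> x \<bullet> (L *v x)" for x
  proof -
    have "0 \<le> x \<bullet> (K *v x)" unfolding K_def by (simp only: FFt_dot inner_ge_zero)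
    then show ?thesis using \<beta>l_pos unfolding L_def
      by (simp add: matrix_vector_mult_add_rdistrib inner_add_right scaleR_matrix_vector_assoc[symmetric])
  qed
  have Lix: "Li *v (L *v x) = x" for x by (metis matrix_vector_mul_assoc matrix_vector_mul_lid LiL)
  have LLix: "L *v (Li *v x) = x" for x by (metis matrix_vector_mul_assoc matrix_vector_mul_lid LLi)
  have HL: "H *v x = L *v x + (\<beta> - \<beta>l) *\<^sub>R (K *v x)" for x
    unfolding H_def L_def by (simp add: matrix_vector_mult_add_rdistrib scaleR_matrix_vector_assoc[symmetric] algebra_simps)
  have CLx: "C *v x = L *v x - \<beta>l *\<^sub>R (K *v x)" for x
    unfolding L_def by (simp add: matrix_vector_mult_add_rdistrib scaleR_matrix_vector_assoc[symmetric] algebra_simps)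
  have Gx: "G *v x = c *\<^sub>R (Li *v (C *v x))" for x
  proof -
    define y where "y = Li *v (K *v x)"
    have 1: "Li *v (H *v x) = x + (\<beta> - \<beta>l) *\<^sub>R y"
      unfolding HL y_def by (simp add: matrix_vector_right_distrib matrix_vector_mult_scaleR Lix)
    have 2: "Li *v (C *v x) = x - \<beta>l *\<^sub>R y"
      unfolding CLx y_def by (simp add: matrix_vector_mult_diff_distrib matrix_vector_mult_scaleR Lix)
    have co: "\<beta>l / \<beta> * (\<beta> - \<beta>l) = c * \<beta>l" unfolding c_def using \<beta>pos by (simp add: field_simps)
    have "G *v x = x - (\<beta>l / \<beta>) *\<^sub>R (x + (\<beta> - \<beta>l) *\<^sub>R y)"
      unfolding G_def by (simp add: matrix_vector_mult_diff_rdistrib scaleR_matrix_vector_assoc[symmetric] matrix_vector_mul_assoc[symmetric] 1)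
    also have "\<dots> = x - (\<beta>l / \<beta>) *\<^sub>R x - (\<beta>l / \<beta> * (\<beta> - \<beta>l)) *\<^sub>R y"
      by (simp add: scaleR_right_distrib)
    also have "\<dots> = c *\<^sub>R x - (c * \<beta>l) *\<^sub>R y" unfolding co c_def by (simp add: scaleR_diff_left)
    also have "\<dots> = c *\<^sub>R (x - \<beta>l *\<^sub>R y)" by (simp add: algebra_simps)
    finally show ?thesis unfolding 2 .
  qed
  have part1: "G = c *\<^sub>R (Li ** C)"
    unfolding matrix_eq by (simp add: Gx scaleR_matrix_vector_assoc[symmetric] matrix_vector_mul_assoc)
  have LG: "L ** G = c *\<^sub>R C"
    unfolding matrix_eq
    by (simp add: Gx matrix_vector_mul_assoc[symmetric] scaleR_matrix_vector_assoc[symmetric]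
        matrix_vector_mult_scaleR LLix)
  have "rank (transpose F) < CARD('n)"
    using rank_bound[of F] np_lt_n by (simp add: rank_transpose)
  then have "\<not> inj ((*v) (transpose F))" by (simp add: less_rank_noninjective)
  then obtain a1 a2 where a: "a1 \<noteq> a2" "transpose F *v a1 = transpose F *v a2"
    unfolding inj_on_def by blast
  define u0 where "u0 = a1 - a2"
  have u0: "u0 \<noteq> 0" using a unfolding u0_def by simp
  have Ku0: "K *v u0 = 0" unfolding K_def u0_def
    using a(2) by (simp del: transpose_matrix_vector add: matrix_vector_mul_assoc[symmetric] matrix_vector_mult_diff_distrib)
  have Gu0: "G *v u0 = c *\<^sub>R u0" unfolding Gx CLx Ku0 by (simp add: Lix)
  have SR: "spectral_radius G = c"
    by (rule spec_rad[OF C_spd L LG CL c0 u0 Gu0])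
  define Hi where "Hi = matrix_inv H"
  have HHi: "H ** Hi = mat 1" and HiH: "Hi ** H = mat 1" using spd_inv[OF H] unfolding Hi_def by auto
  define xs where "xs = Hi *v b"
  have Hxs: "H *v xs = b" unfolding xs_def by (metis matrix_vector_mul_assoc matrix_vector_mul_lid HHi)
  have uniq: "x = xs" if "H *v x = b" for x
    using that unfolding xs_def by (metis matrix_vector_mul_assoc matrix_vector_mul_lid HiH)
  have ex1: "\<exists>!x. H *v x = b" using Hxs uniq by blast
  have THE: "(THE x. H *v x = b) = xs" using Hxs uniq by (rule the_equality)
  define e where "e k = w k - xs" for k
  have estep: "e (Suc k) = c *\<^sub>R (Li *v (C *v e k))" for k
  proof -
    have it: "w (Suc k) = w k + (\<beta>l / \<beta>) *\<^sub>R (Li *v (b - H *v w k))"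
      using iter[of k] unfolding Li_def L_def H_def K_def scalar_mult_eq_scaleR .
    have bh: "b - H *v w k = - (H *v e k)" unfolding e_def using Hxs
      by (simp add: matrix_vector_mult_diff_distrib)
    have neg: "Li *v (- v) = - (Li *v v)" for v
      by (metis diff_0 matrix_vector_mult_diff_distrib matrix_vector_mult_0_right)
    have "e (Suc k) = e k - (\<beta>l / \<beta>) *\<^sub>R (Li *v (H *v e k))"
      unfolding e_def[of "Suc k"] it bh neg unfolding e_def by (simp add: algebra_simps)
    also have "\<dots> = G *v e k"
      unfolding G_def by (simp add: matrix_vector_mult_diff_rdistrib scaleR_matrix_vector_assoc[symmetric] matrix_vector_mul_assoc[symmetric])
    finally show ?thesis using Gx by simp
  qed
  have "e \<longlonglongrightarrow> 0" using conv_zero[of C L Li c e] C_spd L LLi CL c0 c1 estep by blast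
  then have "(\<lambda>k. e k + xs) \<longlonglongrightarrow> 0 + xs" by (intro tendsto_add) auto
  then have conv: "w \<longlonglongrightarrow> xs" unfolding e_def by simp
  show ?thesis
    using part1 SR c1 ex1 conv THE
    unfolding G_def H_def L_def K_def Li_def c_def by simp
qed

end
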